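(* Let $G$ be a two-legged one-particle-irreducible graph with two distinct external vertices $v_1$ and $v_2$, and suppose every vertex of $G$ has even incidence number. Let $T$ be any spanning tree of $G$, and let $\theta$ be the linear subtree of $T$ consisting of the unique path from $v_1$ to $v_2$ along lines of $T$. Then for every line $\ell\in\theta$ there are two distinct lines $\ell_1,\ell_2$ of $G$, not in $T$, such that $\ell$ lies on the loop generated by $\ell_1$ and on the loop generated by $\ell_2$ (so these two loops overlap on $\ell$), and for each $i\in\{1,2\}$ the graph $T_i$ obtained from $T$ by removing $\ell$ and adding $\ell_i$ is a spanning tree of $G$.
   Context: A graph here consists of vertices, internal lines (edges joining two vertices; multiple lines between the same pair of vertices and lines from a vertex to itself are allowed) and external legs (half-lines attached to a single vertex). It is two-legged if it has exactly two external legs; the vertices to which the external legs are attached are called external vertices. The incidence number of a vertex is the number of line ends (internal line ends and external legs) at that vertex. A graph is one-particle-irreducible (1PI) if it is connected and remains connected after cutting any single internal line. A spanning tree is a subgraph consisting of internal lines that is a tree containing all vertices. For a spanning tree $T$ and an internal line $\ell'\notin T$, the loop generated by $\ell'$ is the unique cycle in $T\cup\{\ell'\}$, i.e. $\ell'$ together with the path in $T$ joining its endpoints. *)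

theory Defs
  imports Main
begin

text \<open>A graph: vertex set V, internal lines L with endpoints given by
  ends :: 'l => 'v * 'v (self-loops and multiple lines allowed),
  external legs E attached to vertices by att :: 'e => 'v.\<close>

definition wf_graph :: "'v set \<Rightarrow> 'l set \<Rightarrow> ('l \<Rightarrow> 'v \<times> 'v) \<Rightarrow> 'e set \<Rightarrow> ('e \<Rightarrow> 'v) \<Rightarrow> bool" where
  "wf_graph V L ends E att \<longleftrightarrow> finite V \<and> finite L \<and> finite E \<and>
     (\<forall>l\<in>L. fst (ends l) \<in> V \<and> snd (ends l) \<in> V) \<and> (\<forall>e\<in>E. att e \<in> V)"

text \<open>Incidence number: internal line ends (a self-loop counts twice) plus external legs.\<close>
definition incidence :: "'l set \<Rightarrow> ('l \<Rightarrow> 'v \<times> 'v) \<Rightarrow> 'e set \<Rightarrow> ('e \<Rightarrow> 'v) \<Rightarrow> 'v \<Rightarrow> nat" where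
  "incidence L ends E att v =
     card {l\<in>L. fst (ends l) = v} + card {l\<in>L. snd (ends l) = v} + card {e\<in>E. att e = v}"

inductive tpath :: "'l set \<Rightarrow> ('l \<Rightarrow> 'v \<times> 'v) \<Rightarrow> 'v \<Rightarrow> 'l list \<Rightarrow> 'v \<Rightarrow> 'v set \<Rightarrow> bool"
  for S ends where
  nil: "tpath S ends u [] u {u}"
| cons: "\<lbrakk>l \<in> S; ends l = (u, x) \<or> ends l = (x, u); tpath S ends x ls w Vs; u \<notin> Vs\<rbrakk>
         \<Longrightarrow> tpath S ends u (l # ls) w (insert u Vs)"

definition connected_via :: "'v set \<Rightarrow> 'l set \<Rightarrow> ('l \<Rightarrow> 'v \<times> 'v) \<Rightarrow> bool" where
  "connected_via V S ends \<longleftrightarrow> (\<forall>u\<in>V. \<forall>w\<in>V. \<exists>ls Vs. tpath S ends u ls w Vs)"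

definition is_1PI :: "'v set \<Rightarrow> 'l set \<Rightarrow> ('l \<Rightarrow> 'v \<times> 'v) \<Rightarrow> bool" where
  "is_1PI V L ends \<longleftrightarrow> connected_via V L ends \<and> (\<forall>l\<in>L. connected_via V (L - {l}) ends)"

text \<open>A set of lines contains no cycle: no line l whose endpoints are joined
  by a path avoiding l (covers self-loops and multiple lines).\<close>
definition acyclic_lines :: "'l set \<Rightarrow> ('l \<Rightarrow> 'v \<times> 'v) \<Rightarrow> bool" where
  "acyclic_lines S ends \<longleftrightarrow>
     \<not> (\<exists>l\<in>S. \<exists>ls Vs. tpath (S - {l}) ends (snd (ends l)) ls (fst (ends l)) Vs)"

definition spanning_tree :: "'v set \<Rightarrow> 'l set \<Rightarrow> ('l \<Rightarrow> 'v \<times> 'v) \<Rightarrow> 'l set \<Rightarrow> bool" where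
  "spanning_tree V L ends T \<longleftrightarrow> T \<subseteq> L \<and> connected_via V T ends \<and> acyclic_lines T ends"

text \<open>Lines of the path in T joining u and w (unique when T is a tree).\<close>
definition tree_path_lines :: "'l set \<Rightarrow> ('l \<Rightarrow> 'v \<times> 'v) \<Rightarrow> 'v \<Rightarrow> 'v \<Rightarrow> 'l set" where
  "tree_path_lines T ends u w = \<Union>{set ls | ls Vs. tpath T ends u ls w Vs}"

definition loop_gen :: "'l set \<Rightarrow> ('l \<Rightarrow> 'v \<times> 'v) \<Rightarrow> 'l \<Rightarrow> 'l set" where
  "loop_gen T ends l' = insert l' (tree_path_lines T ends (fst (ends l')) (snd (ends l')))"

end

theory Submission
  imports Defs
begin

definition adj :: "'l set \<Rightarrow> ('l \<Rightarrow> 'v \<times> 'v) \<Rightarrow> 'v \<Rightarrow> 'v \<Rightarrow> bool" where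
  "adj S ends u w \<longleftrightarrow> (\<exists>l\<in>S. ends l = (u,w) \<or> ends l = (w,u))"

abbreviation reach where "reach S ends \<equiv> (adj S ends)\<^sup>*\<^sup>*"

lemma adj_sym: "adj S ends u w \<Longrightarrow> adj S ends w u" unfolding adj_def by auto

lemma reach_sym: "reach S ends u w \<Longrightarrow> reach S ends w u"
  by (induction rule: rtranclp_induct) (auto intro: converse_rtranclp_into_rtranclp adj_sym)

lemma adj_mono: "adj S ends u w \<Longrightarrow> S \<subseteq> S' \<Longrightarrow> adj S' ends u w" unfolding adj_def by auto

lemma reach_mono: "reach S ends u w \<Longrightarrow> S \<subseteq> S' \<Longrightarrow> reach S' ends u w"
  by (induction rule: rtranclp_induct) (auto intro: rtranclp.rtrancl_into_rtrancl adj_mono)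

lemma tpath_start: "tpath S ends u ls w Vs \<Longrightarrow> u \<in> Vs"
  by (induction rule: tpath.induct) auto

lemma tpath_end: "tpath S ends u ls w Vs \<Longrightarrow> w \<in> Vs"
  by (induction rule: tpath.induct) auto

lemma tpath_reach: "tpath S ends u ls w Vs \<Longrightarrow> reach S ends u w"
  by (induction rule: tpath.induct) (auto simp: adj_def intro: converse_rtranclp_into_rtranclp)

lemma tpath_lines: "tpath S ends u ls w Vs \<Longrightarrow> set ls \<subseteq> S"
  by (induction rule: tpath.induct) auto

lemma tpath_mono: "tpath S ends u ls w Vs \<Longrightarrow> set ls \<subseteq> S' \<Longrightarrow> tpath S' ends u ls w Vs"
  by (induction rule: tpath.induct) (auto intro: tpath.intros)

lemma tpath_verts: "tpath S ends u ls w Vs \<Longrightarrow> v \<in> Vs \<Longrightarrow> reach S ends u v"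
proof (induction arbitrary: v rule: tpath.induct)
  case (nil u)
  then show ?case by simp
next
  case (cons l u x ls w Vs)
  then have "adj S ends u x" unfolding adj_def by auto
  with cons show ?case by (auto intro: converse_rtranclp_into_rtranclp)
qed

lemma tpath_suffix: "tpath S ends v ls w Vs \<Longrightarrow> u \<in> Vs \<Longrightarrow> \<exists>ls' Vs'. tpath S ends u ls' w Vs'"
  by (induction rule: tpath.induct) (auto intro: tpath.intros)

lemma reach_tpath: "reach S ends u w \<Longrightarrow> \<exists>ls Vs. tpath S ends u ls w Vs"
proof (induction rule: converse_rtranclp_induct)
  case base then show ?case by (auto intro: tpath.nil)
next
  case (step u v)
  then obtain ls Vs where p: "tpath S ends v ls w Vs" by blast
  from step(1) obtain l where l: "l \<in> S" "ends l = (u,v) \<or> ends l = (v,u)" unfolding adj_def by blast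
  show ?case
  proof (cases "u \<in> Vs")
    case True then show ?thesis using tpath_suffix[OF p] by blast
  next
    case False then show ?thesis using tpath.cons[OF l p] by blast
  qed
qed

lemma reach_iff: "(\<exists>ls Vs. tpath S ends u ls w Vs) \<longleftrightarrow> reach S ends u w"
  using reach_tpath tpath_reach by metis

lemma acyclic_iff: "acyclic_lines S ends \<longleftrightarrow> (\<forall>l\<in>S. \<not> reach (S - {l}) ends (snd (ends l)) (fst (ends l)))"
  unfolding acyclic_lines_def reach_iff[symmetric] by blast

lemma connected_iff: "connected_via V S ends \<longleftrightarrow> (\<forall>u\<in>V. \<forall>w\<in>V. reach S ends u w)"
  unfolding connected_via_def reach_iff[symmetric] by blast

lemma reach_insert:
  assumes "reach (insert e S) ends u w" "ends e = (p,q)"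
  shows "reach S ends u w \<or> (reach S ends u p \<and> reach S ends q w) \<or> (reach S ends u q \<and> reach S ends p w)"
  using assms(1)
proof (induction rule: rtranclp_induct)
  case base then show ?case by simp
next
  case (step v w)
  from step(2) obtain l where l: "l \<in> insert e S" "ends l = (v,w) \<or> ends l = (w,v)" unfolding adj_def by blast
  show ?case
  proof (cases "l = e")
    case True
    with l assms(2) have "(v = p \<and> w = q) \<or> (v = q \<and> w = p)" by auto
    then show ?thesis using step(3) by auto
  next
    case False
    with l have "adj S ends v w" unfolding adj_def by auto
    then show ?thesis using step(3) by (meson rtranclp.rtrancl_into_rtrancl)
  qed
qed

lemma acyclic_subset: "acyclic_lines S ends \<Longrightarrow> S' \<subseteq> S \<Longrightarrow> acyclic_lines S' ends"
  unfolding acyclic_iff by (meson Diff_mono order_refl reach_mono subsetD)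

lemma acyclic_insert:
  assumes ac: "acyclic_lines S ends" and nr: "\<not> reach S ends (fst (ends e)) (snd (ends e))"
  shows "acyclic_lines (insert e S) ends"
proof -
  obtain p q where e: "ends e = (p,q)" by (cases "ends e")
  have eS: "e \<notin> S"
  proof
    assume "e \<in> S"
    then have "adj S ends (fst (ends e)) (snd (ends e))" unfolding adj_def by auto
    then show False using nr by blast
  qed
  show ?thesis unfolding acyclic_iff
  proof
    fix l assume l: "l \<in> insert e S"
    show "\<not> reach (insert e S - {l}) ends (snd (ends l)) (fst (ends l))"
    proof (cases "l = e")
      case True
      then have "insert e S - {l} = S" using eS by auto
      then show ?thesis using nr True reach_sym by metis
    next
      case False
      obtain s t where st: "ends l = (s,t)" by (cases "ends l")
      have lS: "l \<in> S" using l False by auto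
      have eq: "insert e S - {l} = insert e (S - {l})" using False by auto
      have adjl: "adj S ends s t" using lS st unfolding adj_def by auto
      show ?thesis
      proof
        assume "reach (insert e S - {l}) ends (snd (ends l)) (fst (ends l))"
        then have "reach (insert e (S - {l})) ends t s" using eq st by simp
        from reach_insert[OF this e] show False
        proof (elim disjE conjE)
          assume "reach (S - {l}) ends t s"
          then show False using ac lS st unfolding acyclic_iff by auto
        next
          assume a: "reach (S - {l}) ends t p" "reach (S - {l}) ends q s"
          have r1: "reach S ends p t" using reach_sym[OF reach_mono[OF a(1) Diff_subset]] .
          have r2: "reach S ends s q" using reach_sym[OF reach_mono[OF a(2) Diff_subset]] .
          have "reach S ends p q"
            using rtranclp_trans[OF r1 converse_rtranclp_into_rtranclp[OF adj_sym[OF adjl] r2]] .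
          then show False using nr e by simp
        next
          assume a: "reach (S - {l}) ends t q" "reach (S - {l}) ends p s"
          have r1: "reach S ends t q" using reach_mono[OF a(1) Diff_subset] .
          have r2: "reach S ends p s" using reach_mono[OF a(2) Diff_subset] .
          have "reach S ends p q"
            using rtranclp_trans[OF r2 converse_rtranclp_into_rtranclp[OF adjl r1]] .
          then show False using nr e by simp
        qed
      qed
    qed
  qed
qed

lemma tpath_cons_inv: "tpath S ends u (l # ls) w Vs \<Longrightarrow> \<exists>x Vs'. l \<in> S \<and> (ends l = (u,x) \<or> ends l = (x,u)) \<and> tpath S ends x ls w Vs' \<and> u \<notin> Vs' \<and> Vs = insert u Vs'"
  by (erule tpath.cases) auto

lemma tpath_split:
  "tpath S ends u (p @ l # q) w Vs \<Longrightarrow> \<exists>x y Vp Vq. tpath S ends u p x Vp \<and> (ends l = (x,y) \<or> ends l = (y,x))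
     \<and> tpath S ends y q w Vq \<and> Vp \<inter> Vq = {} \<and> Vs = Vp \<union> Vq"
proof (induction p arbitrary: u Vs)
  case Nil
  from Nil.prems have "tpath S ends u (l # q) w Vs" by simp
  then obtain y Vq where h: "ends l = (u,y) \<or> ends l = (y,u)" "tpath S ends y q w Vq" "u \<notin> Vq" "Vs = insert u Vq"
    using tpath_cons_inv by metis
  have "tpath S ends u [] u {u}" by (rule tpath.nil)
  moreover have "{u} \<inter> Vq = {}" "Vs = {u} \<union> Vq" using h by auto
  ultimately show ?case using h(1,2) by blast
next
  case (Cons a p)
  from Cons.prems have "tpath S ends u (a # (p @ l # q)) w Vs" by simp
  then obtain x0 Vs' where h: "a \<in> S" "ends a = (u,x0) \<or> ends a = (x0,u)" "tpath S ends x0 (p @ l # q) w Vs'" "u \<notin> Vs'" "Vs = insert u Vs'"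
    using tpath_cons_inv by metis
  from Cons.IH[OF h(3)] obtain x y Vp Vq where ih: "tpath S ends x0 p x Vp" "(ends l = (x,y) \<or> ends l = (y,x))"
     "tpath S ends y q w Vq" "Vp \<inter> Vq = {}" "Vs' = Vp \<union> Vq" by blast
  have "tpath S ends u (a # p) x (insert u Vp)" using tpath.cons[OF h(1) h(2) ih(1)] h(4) ih(5) by auto
  moreover have "insert u Vp \<inter> Vq = {}" using h(4) ih(4) ih(5) by auto
  moreover have "Vs = insert u Vp \<union> Vq" using h(5) ih(5) by auto
  ultimately show ?case using ih(2) ih(3) by blast
qed

lemma tpath_line_verts: "tpath S ends u ls w Vs \<Longrightarrow> l \<in> set ls \<Longrightarrow> fst (ends l) \<in> Vs \<and> snd (ends l) \<in> Vs"
proof (induction rule: tpath.induct)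
  case (nil u) then show ?case by simp
next
  case (cons l' u x ls w Vs)
  have "x \<in> Vs" using cons(3) tpath_start by metis
  then show ?case using cons by auto
qed

lemma tpath_concat:
  "tpath S ends u p w V1 \<Longrightarrow> l \<in> S \<Longrightarrow> ends l = (w,w') \<or> ends l = (w',w) \<Longrightarrow> tpath S ends w' q z V2
   \<Longrightarrow> V1 \<inter> V2 = {} \<Longrightarrow> tpath S ends u (p @ l # q) z (V1 \<union> V2)"
proof (induction rule: tpath.induct)
  case (nil u)
  then show ?case using tpath.cons[of l S ends u w' q z V2] by auto
next
  case (cons l0 u x ls w Vs)
  then have "tpath S ends x (ls @ l # q) z (Vs \<union> V2)" by auto
  moreover have "u \<notin> Vs \<union> V2" using cons by auto
  ultimately have "tpath S ends u (l0 # ls @ l # q) z (insert u (Vs \<union> V2))"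
    using tpath.cons[of l0 S ends u x "ls @ l # q" z "Vs \<union> V2"] cons(1,2) by auto
  then show ?case by simp
qed

lemma reach_cross: "reach S ends u w \<Longrightarrow> u \<in> A \<Longrightarrow> w \<notin> A \<Longrightarrow> \<exists>l\<in>S. (fst (ends l) \<in> A) \<noteq> (snd (ends l) \<in> A)"
proof (induction rule: rtranclp_induct)
  case base then show ?case by simp
next
  case (step v w)
  show ?case
  proof (cases "v \<in> A")
    case True
    from step(2) obtain l where "l \<in> S" "ends l = (v,w) \<or> ends l = (w,v)" unfolding adj_def by blast
    then show ?thesis using True step by (intro bexI[of _ l]) auto
  next
    case False then show ?thesis using step by auto
  qed
qed

lemma card_fiber_sum: "finite S \<Longrightarrow> finite A \<Longrightarrow> (\<Sum>v\<in>A. card {l\<in>S. f l = v}) = card {l\<in>S. f l \<in> A}"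
proof -
  assume "finite S" "finite A"
  have "{l\<in>S. f l \<in> A} = (\<Union>v\<in>A. {l\<in>S. f l = v})" by auto
  moreover have "card (\<Union>v\<in>A. {l\<in>S. f l = v}) = (\<Sum>v\<in>A. card {l\<in>S. f l = v})"
    by (rule card_UN_disjoint) (use \<open>finite S\<close> \<open>finite A\<close> in auto)
  ultimately show ?thesis by simp
qed

lemma card_split: "finite L \<Longrightarrow> card {l\<in>L. P l} = card {l\<in>L. P l \<and> Q l} + card {l\<in>L. P l \<and> \<not> Q l}"
proof -
  assume f: "finite L"
  have "{l\<in>L. P l} = {l\<in>L. P l \<and> Q l} \<union> {l\<in>L. P l \<and> \<not> Q l}" by auto
  moreover have "card ({l\<in>L. P l \<and> Q l} \<union> {l\<in>L. P l \<and> \<not> Q l}) = card {l\<in>L. P l \<and> Q l} + card {l\<in>L. P l \<and> \<not> Q l}"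
    by (rule card_Un_disjoint) (use f in auto)
  ultimately show ?thesis by simp
qed

lemma path_through:
  assumes "reach R ends x u" "reach R ends y w" "\<not> reach R ends x y" "l \<in> T" "R \<subseteq> T"
    "ends l = (x,y) \<or> ends l = (y,x)"
  shows "\<exists>ls Vs. tpath T ends u ls w Vs \<and> l \<in> set ls"
proof -
  obtain p1 V1 where p1: "tpath R ends u p1 x V1" using reach_tpath reach_sym assms(1) by metis
  obtain p2 V2 where p2: "tpath R ends y p2 w V2" using reach_tpath assms(2) by metis
  have d: "V1 \<inter> V2 = {}"
  proof (rule ccontr)
    assume "V1 \<inter> V2 \<noteq> {}" then obtain v where "v \<in> V1" "v \<in> V2" by blast
    then have "reach R ends u v" "reach R ends y v" using tpath_verts p1 p2 by metis+
    then have "reach R ends x y" using assms(1) reach_sym by (meson rtranclp_trans)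
    with assms(3) show False ..
  qed
  have q1: "tpath T ends u p1 x V1" using tpath_mono[OF p1] tpath_lines[OF p1] assms(5) by blast
  have q2: "tpath T ends y p2 w V2" using tpath_mono[OF p2] tpath_lines[OF p2] assms(5) by blast
  have "tpath T ends u (p1 @ l # p2) w (V1 \<union> V2)" using tpath_concat[OF q1 assms(4) assms(6) q2 d] .
  then show ?thesis by auto
qed

theorem lemma7:
  fixes V :: "'v set" and L :: "'l set" and ends :: "'l \<Rightarrow> 'v \<times> 'v"
    and E :: "'e set" and att :: "'e \<Rightarrow> 'v" and v1 v2 :: 'v and T :: "'l set"
  assumes "wf_graph V L ends E att"
    and "card E = 2" and "att ` E = {v1, v2}" and "v1 \<noteq> v2"
    and "is_1PI V L ends"
    and "\<forall>v\<in>V. even (incidence L ends E att v)"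
    and "spanning_tree V L ends T"
  shows "\<forall>l\<in>tree_path_lines T ends v1 v2.
           \<exists>l1 l2. l1 \<noteq> l2 \<and> l1 \<in> L - T \<and> l2 \<in> L - T \<and>
             l \<in> loop_gen T ends l1 \<and> l \<in> loop_gen T ends l2 \<and>
             spanning_tree V L ends (insert l1 (T - {l})) \<and>
             spanning_tree V L ends (insert l2 (T - {l}))"
proof
  fix l assume lP: "l \<in> tree_path_lines T ends v1 v2"
  have TL: "T \<subseteq> L" and Tc0: "connected_via V T ends" and Tac: "acyclic_lines T ends"
    using assms(7) unfolding spanning_tree_def by auto
  have Tc: "\<forall>u\<in>V. \<forall>w\<in>V. reach T ends u w" using Tc0 unfolding connected_iff .
  have wfL: "\<forall>l\<in>L. fst (ends l) \<in> V \<and> snd (ends l) \<in> V" and finL: "finite L"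
    and finE: "finite E" and finV: "finite V" and wfE: "\<forall>e\<in>E. att e \<in> V"
    using assms(1) unfolding wf_graph_def by simp_all
  from lP obtain ls Vs where ls: "tpath T ends v1 ls v2 Vs" "l \<in> set ls"
    unfolding tree_path_lines_def by blast
  then obtain p q where pq: "ls = p @ l # q" by (meson split_list)
  obtain x y Vp Vq where sp: "tpath T ends v1 p x Vp" "ends l = (x,y) \<or> ends l = (y,x)"
      "tpath T ends y q v2 Vq" "Vp \<inter> Vq = {}"
    using tpath_split[OF ls(1)[unfolded pq]] by blast
  define R where "R = T - {l}"
  have lT: "l \<in> T" using tpath_lines[OF ls(1)] ls(2) by blast
  have RT: "R \<subseteq> T" unfolding R_def by auto
  have xyV: "x \<in> V" "y \<in> V" using wfL lT TL sp(2) by fastforce+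
  have yVq: "y \<in> Vq" using tpath_start[OF sp(3)] .
  have xVp: "x \<in> Vp" using tpath_end[OF sp(1)] .
  have "l \<notin> set p"
  proof
    assume "l \<in> set p"
    then have "y \<in> Vp" using tpath_line_verts[OF sp(1)] sp(2) by force
    then show False using yVq sp(4) by blast
  qed
  then have "set p \<subseteq> R" using tpath_lines[OF sp(1)] unfolding R_def by blast
  then have r1: "reach R ends v1 x" using tpath_reach[OF tpath_mono[OF sp(1)]] by blast
  have "l \<notin> set q"
  proof
    assume "l \<in> set q"
    then have "x \<in> Vq" using tpath_line_verts[OF sp(3)] sp(2) by force
    then show False using xVp sp(4) by blast
  qed
  then have "set q \<subseteq> R" using tpath_lines[OF sp(3)] unfolding R_def by blast
  then have r2: "reach R ends y v2" using tpath_reach[OF tpath_mono[OF sp(3)]] by blast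
  have nxy: "\<not> reach R ends x y"
  proof
    assume a: "reach R ends x y"
    have "\<not> reach R ends (snd (ends l)) (fst (ends l))" using Tac lT unfolding acyclic_iff R_def by blast
    then show False using a reach_sym sp(2) by fastforce
  qed
  define A where "A = {v. reach R ends x v}"
  define B where "B = {v. reach R ends y v}"
  have AB: "A \<inter> B = {}"
  proof (rule ccontr)
    assume "A \<inter> B \<noteq> {}"
    then obtain v where "reach R ends x v" "reach R ends y v" unfolding A_def B_def by blast
    then have "reach R ends x y" using reach_sym rtranclp_trans by metis
    then show False using nxy by blast
  qed
  have cover0: "v \<in> A \<or> v \<in> B" if "reach T ends x v" for v
    using that
  proof (induction rule: rtranclp_induct)
    case base then show ?case by (simp add: A_def)
  next
    case (step v w)
    from step(2) obtain l' where l': "l' \<in> T" "ends l' = (v,w) \<or> ends l' = (w,v)" unfolding adj_def by blast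
    show ?case
    proof (cases "l' = l")
      case True
      with l' sp(2) have "w = x \<or> w = y" by auto
      then show ?thesis by (auto simp: A_def B_def)
    next
      case False
      with l' have "adj R ends v w" unfolding adj_def R_def by auto
      with step(3) show ?thesis unfolding A_def B_def by (auto intro: rtranclp.rtrancl_into_rtrancl)
    qed
  qed
  have cover: "v \<in> A \<or> v \<in> B" if "v \<in> V" for v
  proof -
    have "reach T ends x v" using Tc xyV(1) that by blast
    then show ?thesis by (rule cover0)
  qed
  have closedA: "w \<in> A" if "u \<in> A" "reach R ends u w" for u w
    using that unfolding A_def by (simp add: rtranclp_trans[of _ x u w])
  have v1A: "v1 \<in> A" using reach_sym[OF r1] unfolding A_def by simp
  have v2B: "v2 \<in> B" using r2 unfolding B_def by blast
  have v2A: "v2 \<notin> A" using v2B AB by blast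
  define K where "K = {l'\<in>L. (fst (ends l') \<in> A) \<noteq> (snd (ends l') \<in> A)}"
  have xA: "x \<in> A" unfolding A_def by simp
  have yB: "y \<in> B" unfolding B_def by simp
  have yA: "y \<notin> A" using yB AB by blast
  have lK: "l \<in> K" unfolding K_def using lT TL sp(2) xA yA by auto
  have KT: "l' \<notin> T" if "l' \<in> K" "l' \<noteq> l" for l'
  proof
    assume "l' \<in> T"
    then have "l' \<in> R" using that unfolding R_def by auto
    then have h: "adj R ends (fst (ends l')) (snd (ends l'))" unfolding adj_def by auto
    have "(fst (ends l') \<in> A) = (snd (ends l') \<in> A)"
      using closedA[OF _ r_into_rtranclp[where r="adj R ends", OF h]]
        closedA[OF _ r_into_rtranclp[where r="adj R ends", OF adj_sym[OF h]]] by blast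
    then show False using that unfolding K_def by auto
  qed
  define A0 where "A0 = A \<inter> V"
  have finA0: "finite A0" using finV unfolding A0_def by auto
  have ev: "even (\<Sum>v\<in>A0. incidence L ends E att v)"
    using assms(6) by (auto simp: A0_def intro!: dvd_sum)
  have sumeq: "(\<Sum>v\<in>A0. incidence L ends E att v) = card {l'\<in>L. fst (ends l') \<in> A0}
       + card {l'\<in>L. snd (ends l') \<in> A0} + card {e\<in>E. att e \<in> A0}"
    unfolding incidence_def sum.distrib
    using card_fiber_sum[OF finL finA0, of "\<lambda>l. fst (ends l)"] card_fiber_sum[OF finL finA0, of "\<lambda>l. snd (ends l)"]
      card_fiber_sum[OF finE finA0, of att] by simp
  have eq1: "{l'\<in>L. fst (ends l') \<in> A0} = {l'\<in>L. fst (ends l') \<in> A}" using wfL unfolding A0_def by auto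
  have eq2: "{l'\<in>L. snd (ends l') \<in> A0} = {l'\<in>L. snd (ends l') \<in> A}" using wfL unfolding A0_def by auto
  have e3: "{e\<in>E. att e \<in> A0} = {e\<in>E. att e = v1}"
  proof -
    have "att e \<in> {v1, v2}" if "e \<in> E" for e using assms(3) that by blast
    then show ?thesis using v1A v2A wfE assms(1) unfolding A0_def wf_graph_def by auto
  qed
  have inj: "inj_on att E"
  proof (rule eq_card_imp_inj_on[OF finE])
    show "card (att ` E) = card E" using assms(2,3,4) by simp
  qed
  obtain e1 where e1: "e1 \<in> E" "att e1 = v1" proof -
    have "v1 \<in> att ` E" using assms(3) by simp
    then show ?thesis using that by blast
  qed
  have "{e\<in>E. att e = v1} = {e1}" using inj e1 unfolding inj_on_def by auto
  then have legs: "card {e\<in>E. att e \<in> A0} = 1" using e3 by simp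
  have c1: "card {l'\<in>L. fst (ends l') \<in> A} = card {l'\<in>L. fst (ends l') \<in> A \<and> snd (ends l') \<in> A}
      + card {l'\<in>L. fst (ends l') \<in> A \<and> \<not> snd (ends l') \<in> A}"
    by (rule card_split[OF finL])
  have c2: "card {l'\<in>L. snd (ends l') \<in> A} = card {l'\<in>L. snd (ends l') \<in> A \<and> fst (ends l') \<in> A}
      + card {l'\<in>L. snd (ends l') \<in> A \<and> \<not> fst (ends l') \<in> A}"
    by (rule card_split[OF finL])
  have c3: "card K = card {l'\<in>L. (fst (ends l') \<in> A) \<noteq> (snd (ends l') \<in> A) \<and> fst (ends l') \<in> A}
      + card {l'\<in>L. (fst (ends l') \<in> A) \<noteq> (snd (ends l') \<in> A) \<and> \<not> fst (ends l') \<in> A}"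
    unfolding K_def by (rule card_split[OF finL])
  have s1: "{l'\<in>L. snd (ends l') \<in> A \<and> fst (ends l') \<in> A} = {l'\<in>L. fst (ends l') \<in> A \<and> snd (ends l') \<in> A}" by auto
  have s2: "{l'\<in>L. (fst (ends l') \<in> A) \<noteq> (snd (ends l') \<in> A) \<and> fst (ends l') \<in> A} = {l'\<in>L. fst (ends l') \<in> A \<and> \<not> snd (ends l') \<in> A}" by auto
  have s3: "{l'\<in>L. (fst (ends l') \<in> A) \<noteq> (snd (ends l') \<in> A) \<and> \<not> fst (ends l') \<in> A} = {l'\<in>L. snd (ends l') \<in> A \<and> \<not> fst (ends l') \<in> A}" by auto
  have X: "(\<Sum>v\<in>A0. incidence L ends E att v) = card {l'\<in>L. fst (ends l') \<in> A} + card {l'\<in>L. snd (ends l') \<in> A} + 1"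
    using sumeq eq1 eq2 legs by simp
  have Y: "card {l'\<in>L. fst (ends l') \<in> A} + card {l'\<in>L. snd (ends l') \<in> A} = 2 * card {l'\<in>L. fst (ends l') \<in> A \<and> snd (ends l') \<in> A} + card K"
    using c1 c2 c3 s1 s2 s3 by simp
  have "even (card {l'\<in>L. fst (ends l') \<in> A} + card {l'\<in>L. snd (ends l') \<in> A} + 1)" using ev X by simp
  then have "even (2 * card {l'\<in>L. fst (ends l') \<in> A \<and> snd (ends l') \<in> A} + card K + 1)" using Y by simp
  then have oddK: "odd (card K)" by simp
  have "connected_via V (L - {l}) ends" using assms(5) lT TL unfolding is_1PI_def by auto
  then have "reach (L - {l}) ends x y" using xyV unfolding connected_iff by blast
  then obtain l' where l': "l' \<in> L - {l}" "(fst (ends l') \<in> A) \<noteq> (snd (ends l') \<in> A)"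
    using reach_cross[of "L - {l}" ends x y A] xA yA by blast
  have finK: "finite K" using finL unfolding K_def by auto
  have l'K: "l' \<in> K" using l' unfolding K_def by auto
  have "card {l, l'} \<le> card K" using lK l'K finK by (intro card_mono) auto
  then have "card K \<ge> 2" using l' by auto
  with oddK have "card K \<ge> 3" by presburger
  then have cK: "card (K - {l}) \<ge> 2" using lK finK by auto
  then have "K - {l} \<noteq> {}" by (metis card.empty not_numeral_le_zero)
  then obtain l1 where l1: "l1 \<in> K - {l}" by blast
  have "card (K - {l} - {l1}) \<ge> 1" using cK l1 finK by auto
  then have "K - {l} - {l1} \<noteq> {}" by (metis card.empty not_one_le_zero)
  then obtain l2 where l2: "l2 \<in> K - {l} - {l1}" by blast
  have l12: "l1 \<in> K - {l}" "l2 \<in> K - {l}" "l1 \<noteq> l2" using l1 l2 by auto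
  have good: "li \<in> L - T \<and> l \<in> loop_gen T ends li \<and> spanning_tree V L ends (insert li (T - {l}))"
    if li: "li \<in> K - {l}" for li
  proof -
    obtain a b where ab: "ends li = (a,b)" by (cases "ends li")
    have liL: "li \<in> L" using li unfolding K_def by auto
    have liT: "li \<notin> T" using KT li by auto
    have abV: "a \<in> V" "b \<in> V" using wfL liL ab by force+
    have cr: "(a \<in> A) \<noteq> (b \<in> A)" using li ab unfolding K_def by auto
    have nyx: "\<not> reach R ends y x" using reach_sym[of R ends y x] nxy by blast
    have sides: "(reach R ends x a \<and> reach R ends y b) \<or> (reach R ends y a \<and> reach R ends x b)"
    proof (cases "a \<in> A")
      case True
      then have "b \<notin> A" using cr by blast
      then have "b \<in> B" using cover[OF abV(2)] by blast
      then show ?thesis using True unfolding A_def B_def by blast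
    next
      case False
      then have "b \<in> A" using cr by blast
      moreover have "a \<in> B" using False cover[OF abV(1)] by blast
      ultimately show ?thesis unfolding A_def B_def by blast
    qed
    have loop: "l \<in> tree_path_lines T ends a b"
    proof -
      have "\<exists>ls Vs. tpath T ends a ls b Vs \<and> l \<in> set ls"
      proof (cases "reach R ends x a \<and> reach R ends y b")
        case True
        then show ?thesis using path_through[of R ends x a y b l T] nxy lT RT sp(2) by blast
      next
        case False
        then have "reach R ends y a" "reach R ends x b" using sides by blast+
        then show ?thesis using path_through[of R ends y a x b l T] nyx lT RT sp(2) by blast
      qed
      then show ?thesis unfolding tree_path_lines_def by blast
    qed
    have nrab: "\<not> reach R ends a b"
    proof
      assume h: "reach R ends a b"
      have "reach R ends x y"
      proof (cases "reach R ends x a \<and> reach R ends y b")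
        case True
        then have "reach R ends b y" using reach_sym[of R ends y b] by blast
        then show ?thesis using True h by (meson rtranclp_trans)
      next
        case False
        then have h1: "reach R ends y a" "reach R ends x b" using sides by blast+
        have "reach R ends b a" using reach_sym[OF h] .
        then have "reach R ends x a" using h1(2) by (meson rtranclp_trans)
        moreover have "reach R ends a y" using reach_sym[OF h1(1)] .
        ultimately show ?thesis by (meson rtranclp_trans)
      qed
      then show False using nxy by blast
    qed
    have eqT: "insert li (T - {l}) = insert li R" unfolding R_def by simp
    have acy: "acyclic_lines (insert li R) ends"
      using acyclic_insert[OF acyclic_subset[OF Tac RT], of li] nrab ab by simp
    have m: "R \<subseteq> insert li R" by auto
    have mono: "reach (insert li R) ends u w" if "reach R ends u w" for u w
      using reach_mono[OF that m] .
    have adjab: "adj (insert li R) ends a b" using ab unfolding adj_def by auto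
    have rab: "reach (insert li R) ends a b" using r_into_rtranclp[where r="adj (insert li R) ends", OF adjab] .
    have rba: "reach (insert li R) ends b a" using reach_sym[OF rab] .
    have xy': "reach (insert li R) ends x y"
    proof (cases "reach R ends x a \<and> reach R ends y b")
      case True
      then have "reach (insert li R) ends x a" "reach (insert li R) ends b y"
        using mono reach_sym[of R ends y b] by blast+
      then show ?thesis using rab by (meson rtranclp_trans)
    next
      case False
      then have h1: "reach R ends y a" "reach R ends x b" using sides by blast+
      then have "reach (insert li R) ends x b" "reach (insert li R) ends a y"
        using mono reach_sym[of R ends y a] by blast+
      then show ?thesis using rba by (meson rtranclp_trans)
    qed
    have xv: "reach (insert li R) ends x v" if "v \<in> V" for v
    proof -
      from cover[OF that] show ?thesis
      proof
        assume "v \<in> A" then show ?thesis using mono unfolding A_def by blast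
      next
        assume "v \<in> B" then have "reach (insert li R) ends y v" using mono unfolding B_def by blast
        then show ?thesis using xy' by (meson rtranclp_trans)
      qed
    qed
    have conn: "connected_via V (insert li R) ends"
      unfolding connected_iff
    proof (intro ballI)
      fix u w assume uw: "u \<in> V" "w \<in> V"
      have "reach (insert li R) ends u x" "reach (insert li R) ends x w"
        using reach_sym[OF xv[OF uw(1)]] xv[OF uw(2)] by blast+
      then show "reach (insert li R) ends u w" by (meson rtranclp_trans)
    qed
    have sub: "insert li R \<subseteq> L" using liL TL RT by auto
    have "spanning_tree V L ends (insert li (T - {l}))"
      unfolding eqT spanning_tree_def using sub conn acy by blast
    then show ?thesis using liL liT loop unfolding loop_gen_def ab by auto
  qed
  show "\<exists>l1 l2. l1 \<noteq> l2 \<and> l1 \<in> L - T \<and> l2 \<in> L - T \<and>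
             l \<in> loop_gen T ends l1 \<and> l \<in> loop_gen T ends l2 \<and>
             spanning_tree V L ends (insert l1 (T - {l})) \<and>
             spanning_tree V L ends (insert l2 (T - {l}))"
    using good[OF l12(1)] good[OF l12(2)] l12(3) by blast
qed

end
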